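(* Let $a_0,\dots,a_4,b_0,\dots,b_4>0$. Assume $Q<0$, $z_0>0$ (so that $\xi^{ext}_1,\dots,\xi^{ext}_4$ are real) and $\xi_{min}>0$. If either (a) $P_5(\xi_{min})=0$ or (b) $P_5(\xi_{max})=0$, then the quartic operator $\mathcal{Q}$ has at least two fixed points in $\mathbb{R}_>^2$, i.e. $N_>^{fix}(\mathcal{Q})\ge 2$.
   Context: Quartic operator on $\mathbb{R}_+^2=\{(x,y):x\ge0,y\ge0\}$: $\mathcal{Q}(x,y)=\big(\sum_{i=0}^4\binom{4}{i}a_i x^{4-i}y^i,\ \sum_{i=0}^4\binom{4}{i}b_i x^{4-i}y^i\big)$; $\mathbb{R}_>^2=\{(x,y):x>0,y>0\}$; $N_>^{fix}(\mathcal{Q})$ is the number of fixed points of $\mathcal{Q}$ in $\mathbb{R}_>^2$. Set $\mu_0=a_4$, $\mu_1=4a_3-b_4$, $\mu_2=6a_2-4b_3$, $\mu_3=4a_1-6b_2$, $\mu_4=a_0-4b_1$, $\mu_5=b_0$, and $P_5(\xi)=\mu_0\xi^5+\mu_1\xi^4+\mu_2\xi^3+\mu_3\xi^2+\mu_4\xi-\mu_5$. Define $p=\frac{15\mu_0\mu_2-6\mu_1^2}{25\mu_0^2}$, $q=\frac{50\mu_0^2\mu_3+8\mu_1^3-30\mu_0\mu_1\mu_2}{125\mu_0^3}$, $r=\frac{15\mu_0\mu_1^2\mu_2-50\mu_0^2\mu_1\mu_3-3\mu_1^4+125\mu_0^3\mu_4}{625\mu_0^4}$ (so that $\omega^4+p\omega^2+q\omega+r=P_5'(\omega-\frac{\mu_1}{5\mu_0})/(5\mu_0)$),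 $a=-\frac{p^2}{12}-r$, $b=-\frac{p^3}{108}+\frac{pr}{3}-\frac{q^2}{8}$, $Q=(a/3)^3+(b/2)^2$. When $Q<0$ (hence $a<0$), let $\alpha\in[0,\pi]$ with $\cos\alpha=-\frac{b}{2}\left(-\frac{3}{a}\right)^{3/2}$ and $z_0=2\sqrt{-a/3}\,\cos\!\left(\frac{2\pi}{3}+\frac{\alpha}{3}\right)-\frac{p}{3}$. For $z_0>0$ put $\xi^{ext}_{1,2}=\frac12\Big(\sqrt{2z_0}\pm\sqrt{2z_0-4\big(\frac p2+z_0+\frac{q}{2\sqrt{2z_0}}\big)}\Big)-\frac{\mu_1}{5\mu_0}$, $\xi^{ext}_{3,4}=\frac12\Big(-\sqrt{2z_0}\pm\sqrt{2z_0-4\big(\frac p2+z_0-\frac{q}{2\sqrt{2z_0}}\big)}\Big)-\frac{\mu_1}{5\mu_0}$, and $\xi_{min}=\min_j\xi^{ext}_j$, $\xi_{max}=\max_j\xi^{ext}_j$. *)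

theory Defs
  imports Complex_Main
begin

text \<open>Coefficients a_0..a_4, b_0..b_4 are given as functions nat => real (only indices 0..4 used).\<close>

definition quartic_op :: "(nat \<Rightarrow> real) \<Rightarrow> (nat \<Rightarrow> real) \<Rightarrow> real \<times> real \<Rightarrow> real \<times> real" where
  "quartic_op a b = (\<lambda>(x, y).
     ((\<Sum>i=0..4. real (4 choose i) * a i * x ^ (4 - i) * y ^ i),
      (\<Sum>i=0..4. real (4 choose i) * b i * x ^ (4 - i) * y ^ i)))"

definition fixed_points_pos :: "(nat \<Rightarrow> real) \<Rightarrow> (nat \<Rightarrow> real) \<Rightarrow> (real \<times> real) set" where
  "fixed_points_pos a b = {(x, y). x > 0 \<and> y > 0 \<and> quartic_op a b (x, y) = (x, y)}"

definition mu :: "(nat \<Rightarrow> real) \<Rightarrow> (nat \<Rightarrow> real) \<Rightarrow> nat \<Rightarrow> real" where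
  "mu a b i = (if i = 0 then a 4
    else if i = 1 then 4 * a 3 - b 4
    else if i = 2 then 6 * a 2 - 4 * b 3
    else if i = 3 then 4 * a 1 - 6 * b 2
    else if i = 4 then a 0 - 4 * b 1
    else b 0)"

definition P5 :: "(nat \<Rightarrow> real) \<Rightarrow> (nat \<Rightarrow> real) \<Rightarrow> real \<Rightarrow> real" where
  "P5 a b \<xi> = mu a b 0 * \<xi>^5 + mu a b 1 * \<xi>^4 + mu a b 2 * \<xi>^3 + mu a b 3 * \<xi>^2
      + mu a b 4 * \<xi> - mu a b 5"

definition pp :: "(nat \<Rightarrow> real) \<Rightarrow> (nat \<Rightarrow> real) \<Rightarrow> real" where
  "pp a b = (let m = mu a b in (15 * m 0 * m 2 - 6 * (m 1)^2) / (25 * (m 0)^2))"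

definition qq :: "(nat \<Rightarrow> real) \<Rightarrow> (nat \<Rightarrow> real) \<Rightarrow> real" where
  "qq a b = (let m = mu a b in
     (50 * (m 0)^2 * m 3 + 8 * (m 1)^3 - 30 * m 0 * m 1 * m 2) / (125 * (m 0)^3))"

definition rr :: "(nat \<Rightarrow> real) \<Rightarrow> (nat \<Rightarrow> real) \<Rightarrow> real" where
  "rr a b = (let m = mu a b in
     (15 * m 0 * (m 1)^2 * m 2 - 50 * (m 0)^2 * m 1 * m 3 - 3 * (m 1)^4 + 125 * (m 0)^3 * m 4)
       / (625 * (m 0)^4))"

definition ca :: "(nat \<Rightarrow> real) \<Rightarrow> (nat \<Rightarrow> real) \<Rightarrow> real" where
  "ca a b = - ((pp a b)^2 / 12) - rr a b"

definition cb :: "(nat \<Rightarrow> real) \<Rightarrow> (nat \<Rightarrow> real) \<Rightarrow> real" where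
  "cb a b = - ((pp a b)^3 / 108) + pp a b * rr a b / 3 - (qq a b)^2 / 8"

definition cQ :: "(nat \<Rightarrow> real) \<Rightarrow> (nat \<Rightarrow> real) \<Rightarrow> real" where
  "cQ a b = (ca a b / 3)^3 + (cb a b / 2)^2"

text \<open>alpha in [0,pi] with cos alpha = -(b/2) (-3/a)^(3/2); arccos gives exactly this.\<close>
definition alpha :: "(nat \<Rightarrow> real) \<Rightarrow> (nat \<Rightarrow> real) \<Rightarrow> real" where
  "alpha a b = arccos (- (cb a b / 2) * (sqrt (-3 / ca a b))^3)"

definition z0 :: "(nat \<Rightarrow> real) \<Rightarrow> (nat \<Rightarrow> real) \<Rightarrow> real" where
  "z0 a b = 2 * sqrt (- ca a b / 3) * cos (2 * pi / 3 + alpha a b / 3) - pp a b / 3"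

definition xi_ext :: "(nat \<Rightarrow> real) \<Rightarrow> (nat \<Rightarrow> real) \<Rightarrow> real list" where
  "xi_ext a b = (let z = z0 a b; p = pp a b; q = qq a b; s = sqrt (2 * z);
                     sh = mu a b 1 / (5 * mu a b 0);
                     d1 = sqrt (2 * z - 4 * (p / 2 + z + q / (2 * s)));
                     d2 = sqrt (2 * z - 4 * (p / 2 + z - q / (2 * s)))
                 in [(s + d1) / 2 - sh, (s - d1) / 2 - sh, (- s + d2) / 2 - sh, (- s - d2) / 2 - sh])"

definition xi_min :: "(nat \<Rightarrow> real) \<Rightarrow> (nat \<Rightarrow> real) \<Rightarrow> real" where
  "xi_min a b = Min (set (xi_ext a b))"

definition xi_max :: "(nat \<Rightarrow> real) \<Rightarrow> (nat \<Rightarrow> real) \<Rightarrow> real" where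
  "xi_max a b = Max (set (xi_ext a b))"

end

theory Submission
  imports Defs
begin


lemma trig_roots:
  fixes A B :: real
  assumes Q: "(A/3)^3 + (B/2)^2 < 0"
  defines "al \<equiv> arccos (-(B/2) * (sqrt(-3/A))^3)" and "m \<equiv> sqrt(-A/3)"
  shows "A < 0" "m > 0" "0 < al" "al < pi"
    "\<And>\<theta>. \<theta> \<in> {al/3, 2*pi/3 - al/3, 2*pi/3 + al/3} \<Longrightarrow> (2*m*cos \<theta>)^3 + A*(2*m*cos \<theta>) + B = 0"
    "cos(2*pi/3+al/3) < cos(2*pi/3 - al/3)" "cos(2*pi/3 - al/3) < cos(al/3)"
proof -
  show A: "A < 0"
  proof (rule ccontr)
    assume "\<not> A < 0" then have "(A/3)^3 \<ge> 0" by simp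
    with Q show False by (smt (verit) zero_le_power2)
  qed
  show mpos: "m > 0" using A by (simp add: m_def)
  have m2: "m^2 = -A/3" using A by (simp add: m_def)
  have sm: "sqrt(-3/A) * m = 1"
    using A by (simp add: m_def real_sqrt_mult[symmetric] field_simps)
  define k where "k = -(B/2) * (sqrt(-3/A))^3"
  have km: "k * m^3 = -(B/2)"
  proof -
    have "k * m^3 = -(B/2) * (sqrt(-3/A) * m)^3" by (simp add: k_def power_mult_distrib)
    then show ?thesis using sm by simp
  qed
  have k2: "k^2 < 1"
  proof -
    have m6: "(m^3)^2 = -((A/3)^3)"
    proof -
      have "(m^3)^2 = (m^2)^3" by (simp flip: power_mult)
      then show ?thesis using m2 by simp
    qed
    have "(k*m^3)^2 = (B/2)^2" using km by simp
    then have "k^2 * (-((A/3)^3)) = (B/2)^2" using m6 by (simp add: power_mult_distrib)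
    moreover have "(B/2)^2 < -((A/3)^3)" using Q by simp
    moreover have "-((A/3)^3) > 0" using A by simp
    ultimately show ?thesis by (smt (verit) mult_less_cancel_right2)
  qed
  have kb: "-1 < k" "k < 1" using k2 by (simp_all add: abs_square_less_1 abs_less_iff)
  have al: "al = arccos k" by (simp add: al_def k_def)
  show "0 < al" "al < pi" using arccos_lt_bounded[OF kb] al by auto
  have cosal: "cos al = k" using kb al by simp
  show "(2*m*cos \<theta>)^3 + A*(2*m*cos \<theta>) + B = 0" if th: "\<theta> \<in> {al/3, 2*pi/3 - al/3, 2*pi/3 + al/3}" for \<theta>
  proof -
    have c3: "cos (3*\<theta>) = k"
    proof -
      have "cos (3*\<theta>) = cos al" using th
      proof (elim insertE)
        assume "\<theta> = 2*pi/3 - al/3"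
        then have "3*\<theta> = 2*pi - al" by simp
        then show ?thesis by (simp add: cos_diff)
      qed (auto simp: cos_diff cos_add algebra_simps)
      then show ?thesis using cosal by simp
    qed
    have "(2*m*cos \<theta>)^3 + A*(2*m*cos \<theta>) + B = 2*m^3*(4*cos \<theta>^3 - 3*cos \<theta>) + B"
    proof -
      have "A = -3*m^2" using m2 by simp
      then show ?thesis by (simp add: algebra_simps power_mult_distrib power2_eq_square power3_eq_cube)
    qed
    also have "\<dots> = 2*(k*m^3) + B" using c3 cos_treble_cos[of \<theta>] by simp
    also have "\<dots> = 0" using km by simp
    finally show ?thesis .
  qed
  have pi0: "pi > 0" by simp
  show "cos(2*pi/3+al/3) < cos(2*pi/3 - al/3)"
    using \<open>0 < al\<close> \<open>al < pi\<close> by (subst cos_mono_less_eq) (auto simp: field_simps)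
  show "cos(2*pi/3 - al/3) < cos(al/3)"
    using \<open>0 < al\<close> \<open>al < pi\<close> by (subst cos_mono_less_eq) (auto simp: field_simps)
qed



lemma quartic_fact:
  fixes p q r z0 z1 z2 :: real
  assumes z0: "z0 > 0" "z0 < z1" "z0 < z2" "z1 \<noteq> z2"
    and roots: "\<And>z. z \<in> {z0,z1,z2} \<Longrightarrow> z^3 + p*z^2 + (p^2/4 - r)*z - q^2/8 = 0"
  defines "s \<equiv> sqrt(2*z0)"
  defines "c1 \<equiv> p/2+z0+q/(2*s)" and "c2 \<equiv> p/2+z0-q/(2*s)"
  defines "u \<equiv> sqrt(2*z0 - 4*c1)" and "v \<equiv> sqrt(2*z0 - 4*c2)"
  shows "\<And>w. w^4 + p*w^2 + q*w + r = (w-(s+u)/2)*(w-(s-u)/2)*(w-(-s+v)/2)*(w-(-s-v)/2)"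
    "distinct [(s+u)/2, (s-u)/2, (-s+v)/2, (-s-v)/2]"
proof -
  have s: "s > 0" "s^2 = 2*z0" using z0 by (auto simp: s_def)
  define D1 where "D1 = s^2 - 4*c1"
  define D2 where "D2 = s^2 - 4*c2"
  have pe: "p = c1 + c2 - s^2" using s by (simp add: c1_def c2_def)
  have qe: "q = s*(c1 - c2)" using s by (simp add: c1_def c2_def field_simps)
  have re: "r = c1*c2"
  proof -
    have "z0^3 + p*z0^2 + (p^2/4 - r)*z0 - q^2/8 = 0" using roots by simp
    then have "r = z0^2 + p*z0 + p^2/4 - q^2/(8*z0)" using z0 by (simp add: field_simps power2_eq_square power3_eq_cube)
    moreover have h4: "4*s^2 = 8*z0" using s by simp
    moreover have "c1*c2 = (p/2+z0)^2 - q^2/(4*s^2)" using s(1) by (simp add: c1_def c2_def field_simps power2_eq_square)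
    then have "c1*c2 = (p/2+z0)^2 - q^2/(8*z0)" unfolding h4 .
    ultimately show ?thesis by (simp add: power2_eq_square algebra_simps)
  qed
  define Qd where "Qd z = z^2 - (D1+D2)/4*z + (D1-D2)^2/64" for z
  have fac: "z^3 + p*z^2 + (p^2/4 - r)*z - q^2/8 = (z - z0) * Qd z" for z
  proof -
    have e: "z0 = s^2/2" using s by simp
    have "z^3 + p*z^2 + (p^2/4 - r)*z - q^2/8 = (z - s^2/2) * Qd z" unfolding pe qe re Qd_def D1_def D2_def
      by (simp add: algebra_simps power2_eq_square power3_eq_cube divide_simps)
    then show ?thesis by (simp only: e)
  qed
  have Q1: "Qd z1 = 0" and Q2: "Qd z2 = 0" using fac[of z1] fac[of z2] roots[of z1] roots[of z2] z0 by auto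
  have sum: "D1 + D2 = 4*(z1+z2)"
  proof -
    have "Qd z1 - Qd z2 = (z1 - z2)*(z1+z2 - (D1+D2)/4)" by (simp add: Qd_def field_simps power2_eq_square)
    then have "z1+z2 - (D1+D2)/4 = 0" using Q1 Q2 z0(4) by simp
    then show ?thesis by (simp add: field_simps)
  qed
  have prod: "(D1-D2)^2/64 = z1*z2"
    using Q1 sum by (simp add: Qd_def algebra_simps power2_eq_square)
  have QdV: "Qd z = (z - z1)*(z - z2)" for z using sum prod by (simp add: Qd_def algebra_simps power2_eq_square)
  have DD: "D1*D2 = 4*(z1-z2)^2"
  proof -
    have "D1*D2 = ((D1+D2)^2 - (D1-D2)^2)/4" by (simp add: algebra_simps power2_eq_square)
    also have "\<dots> = 4*(z1-z2)^2" unfolding sum using prod by (simp add: field_simps power2_eq_square)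
    finally show ?thesis .
  qed
  have DDp: "D1*D2 > 0" using DD z0(4) by simp
  have Dsp: "D1+D2 > 0" using sum z0 by simp
  have D1p: "D1 > 0" and D2p: "D2 > 0"
    using DDp Dsp by (smt (verit) mult_nonneg_nonpos mult_nonpos_nonneg)+
  have u: "u > 0" "u^2 = D1" using D1p s by (auto simp: u_def D1_def)
  have v: "v > 0" "v^2 = D2" using D2p s by (auto simp: v_def D2_def)
  have c1e: "c1 = (s^2 - u^2)/4" using u by (simp add: D1_def)
  have c2e: "c2 = (s^2 - v^2)/4" using v by (simp add: D2_def)
  show "w^4 + p*w^2 + q*w + r = (w-(s+u)/2)*(w-(s-u)/2)*(w-(-s+v)/2)*(w-(-s-v)/2)" for w
  proof -
    have f1: "(w-(s+u)/2)*(w-(s-u)/2) = w^2 - s*w + c1" unfolding c1e by (simp add: field_simps power2_eq_square)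
    have f2: "(w-(-s+v)/2)*(w-(-s-v)/2) = w^2 + s*w + c2" unfolding c2e by (simp add: field_simps power2_eq_square)
    have "(w-(s+u)/2)*(w-(s-u)/2)*(w-(-s+v)/2)*(w-(-s-v)/2) = (w^2 - s*w + c1)*(w^2 + s*w + c2)"
      using f1 f2 by (metis mult.assoc)
    also have "\<dots> = w^4 + p*w^2 + q*w + r" unfolding pe qe re by (simp add: algebra_simps power2_eq_square power4_eq_xxxx)
    finally show ?thesis by simp
  qed
  have Qduv: "Qd z = (z - (u+v)^2/8)*(z - (u-v)^2/8)" for z
    unfolding Qd_def u(2)[symmetric] v(2)[symmetric] by (simp add: field_simps power2_eq_square)
  have nz: "Qd z0 \<noteq> 0" using QdV[of z0] z0 by simp
  have z0s: "z0 = s^2/2" using s by simp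
  have n1: "(u+v)^2 \<noteq> 4*s^2" using nz Qduv[of z0] z0s by auto
  have n2: "(u-v)^2 \<noteq> 4*s^2" using nz Qduv[of z0] z0s by auto
  show "distinct [(s+u)/2, (s-u)/2, (-s+v)/2, (-s-v)/2]"
  proof -
    have a1: "(s+u)/2 \<noteq> (-s+v)/2"
    proof
      assume "(s+u)/2 = (-s+v)/2" then have "v - u = 2*s" by simp
      then have "(u-v)^2 = 4*s^2" by (simp add: power2_eq_square algebra_simps)
      with n2 show False by simp
    qed
    have a2: "(s+u)/2 \<noteq> (-s-v)/2"
    proof
      assume "(s+u)/2 = (-s-v)/2" then have "u + v = -2*s" by simp
      then have "(u+v)^2 = 4*s^2" by (simp add: power2_eq_square)
      with n1 show False by simp
    qed
    have a3: "(s-u)/2 \<noteq> (-s+v)/2"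
    proof
      assume "(s-u)/2 = (-s+v)/2" then have "u + v = 2*s" by simp
      then have "(u+v)^2 = 4*s^2" by (simp add: power2_eq_square)
      with n1 show False by simp
    qed
    have a4: "(s-u)/2 \<noteq> (-s-v)/2"
    proof
      assume "(s-u)/2 = (-s-v)/2" then have "u - v = 2*s" by simp
      then have "(u-v)^2 = 4*s^2" by (simp add: power2_eq_square)
      with n2 show False by simp
    qed
    show ?thesis using a1 a2 a3 a4 u v by auto
  qed
qed



lemma two_roots:
  fixes f :: "real \<Rightarrow> real" and S :: "real set" and c :: real
  assumes fin: "finite S" and card: "card S = 4" and c: "c > 0"
    and der: "\<And>x. (f has_real_derivative (c * (\<Prod>y\<in>S. x - y))) (at x)"
    and f0: "f 0 < 0" and big: "\<And>y. \<exists>M>y. f M > 0"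
    and mpos: "Min S > 0"
    and root: "f (Min S) = 0 \<or> f (Max S) = 0"
  shows "\<exists>t1 t2. t1 > 0 \<and> t2 > 0 \<and> t1 \<noteq> t2 \<and> f t1 = 0 \<and> f t2 = 0"
proof -
  have Sne: "S \<noteq> {}" using card by auto
  have cont: "continuous_on A f" for A
    by (rule DERIV_continuous_on) (rule has_field_derivative_at_within[OF der])
  define m where "m = Min S"
  define M where "M = Max S"
  have mS: "m \<in> S" and MS: "M \<in> S" using fin Sne by (auto simp: m_def M_def)
  have mle: "m \<le> y" and Mge: "y \<le> M" if "y \<in> S" for y using fin that by (auto simp: m_def M_def)
  have c3: "card (S - {m}) = 3" "card (S - {M}) = 3" using card mS MS fin by simp_all
  have S1ne: "S - {m} \<noteq> {}" "S - {M} \<noteq> {}" using c3 by (metis card.empty zero_neq_numeral)+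
  have split: "(\<Prod>y\<in>S. x - y) = (x - z) * (\<Prod>y\<in>S-{z}. x - y)" if "z \<in> S" for x z
    using fin that by (simp add: prod.remove)
  show ?thesis
  proof (cases "f m = 0")
    case True
    define m2 where "m2 = Min (S - {m})"
    have m2S: "m2 \<in> S - {m}" unfolding m2_def using fin S1ne by (intro Min_in) auto
    have mm2: "m < m2" using m2S mle[of m2] by auto
    have m2le: "m2 \<le> y" if "y \<in> S - {m}" for y using fin that by (auto simp: m2_def)
    define t where "t = (m + m2)/2"
    have ft: "f t < f m"
    proof (rule DERIV_neg_imp_decreasing_open[where f=f])
      show "m < t" using mm2 by (simp add: t_def)
      show "continuous_on {m..t} f" by (rule cont)
      fix x assume x: "m < x" "x < t"
      have "(\<Prod>y\<in>S-{m}. x - y) = (-1)^3 * (\<Prod>y\<in>S-{m}. y - x)"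
        using prod_diff_swap[of "\<lambda>_. x" "\<lambda>y. y" "S-{m}"] c3 by simp
      moreover have "(\<Prod>y\<in>S-{m}. y - x) > 0"
        by (rule prod_pos) (use m2le x mm2 in \<open>fastforce simp: t_def\<close>)
      ultimately have "(\<Prod>y\<in>S-{m}. x - y) < 0" by simp
      then have "c * (\<Prod>y\<in>S. x - y) < 0" using split[OF mS, of x] x c
        by (simp add: mult_pos_neg)
      then show "\<exists>y. (f has_real_derivative y) (at x) \<and> y < 0" using der by blast
    qed
    obtain B where B: "B > t" "f B > 0" using big by blast
    obtain r where r: "t \<le> r" "r \<le> B" "f r = 0"
      using IVT'[of f t 0 B] ft True B cont by force
    have "t > m" using mm2 by (simp add: t_def)
    then show ?thesis using r True mpos m_def by (intro exI[of _ m] exI[of _ r]) auto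
  next
    case False
    then have fM: "f M = 0" using root by (simp add: m_def M_def)
    define M2 where "M2 = Max (S - {M})"
    have M2S: "M2 \<in> S - {M}" unfolding M2_def using fin S1ne by (intro Max_in) auto
    have MM2: "M2 < M" using M2S Mge[of M2] by auto
    have M2ge: "y \<le> M2" if "y \<in> S - {M}" for y using fin that by (auto simp: M2_def)
    define t where "t = (M + M2)/2"
    have ft: "f M < f t"
    proof (rule DERIV_neg_imp_decreasing_open[where f=f])
      show "t < M" using MM2 by (simp add: t_def)
      show "continuous_on {t..M} f" by (rule cont)
      fix x assume x: "t < x" "x < M"
      have "(\<Prod>y\<in>S-{M}. x - y) > 0"
        by (rule prod_pos) (use M2ge x MM2 in \<open>fastforce simp: t_def\<close>)
      then have "(x - M) * (\<Prod>y\<in>S-{M}. x - y) < 0" using x by (intro mult_neg_pos) auto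
      then have "c * (\<Prod>y\<in>S. x - y) < 0" using split[OF MS, of x] c
        by (simp add: mult_pos_neg)
      then show "\<exists>y. (f has_real_derivative y) (at x) \<and> y < 0" using der by blast
    qed
    have tpos: "t > 0" using mle[of M2] M2S mpos MM2 by (auto simp: t_def m_def)
    obtain r where r: "0 \<le> r" "r \<le> t" "f r = 0"
      using IVT'[of f 0 0 t] ft fM f0 tpos cont by force
    have "r \<noteq> 0" using r f0 by auto
    moreover have "M > 0" using mle[OF MS] mpos m_def MM2 mle[of M2] M2S by auto
    moreover have "t < M" using MM2 by (simp add: t_def)
    ultimately show ?thesis using r fM by (intro exI[of _ M] exI[of _ r]) auto
  qed
qed



lemma qsum: "(\<Sum>i=0..4. real (4 choose i) * a i * x ^ (4 - i) * y ^ i) = a 0 * x^4 + 4*a 1*x^3*y + 6 * a 2 * x^2*y^2 + 4*a 3*x*y^3 + a 4 * y^4"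
  by (simp add: eval_nat_numeral)

lemma fixpt:
  fixes a b :: "nat \<Rightarrow> real"
  assumes apos: "\<forall>i\<le>4. a i > 0" and t: "t > 0" and P: "P5 a b t = 0"
  defines "At \<equiv> a 0 + 4*a 1*t + 6*a 2*t^2 + 4*a 3*t^3 + a 4*t^4"
  defines "x \<equiv> root 3 (1/At)"
  shows "(x, t*x) \<in> fixed_points_pos a b" "x > 0"
proof -
  have Ap: "At > 0" using apos t unfolding At_def
    by (intro add_pos_pos mult_pos_pos) auto
  show xp: "x > 0" using Ap by (simp add: x_def)
  have x3: "x^3 * At = 1" using Ap by (simp add: x_def)
  have Pt: "t * At = b 0 + 4*b 1*t + 6*b 2*t^2 + 4*b 3*t^3 + b 4*t^4"
    using P unfolding P5_def mu_def At_def by (simp add: algebra_simps power2_eq_square power3_eq_cube power4_eq_xxxx eval_nat_numeral)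
  have e1: "a 0 * x^4 + 4*a 1*x^3*(t*x) + 6 * a 2 * x^2*(t*x)^2 + 4*a 3*x*(t*x)^3 + a 4 * (t*x)^4 = x * (x^3 * At)"
    unfolding At_def by (simp add: algebra_simps power2_eq_square power3_eq_cube power4_eq_xxxx eval_nat_numeral)
  have e2: "b 0 * x^4 + 4*b 1*x^3*(t*x) + 6 * b 2 * x^2*(t*x)^2 + 4*b 3*x*(t*x)^3 + b 4 * (t*x)^4 = x * (x^3 * (t * At))"
    unfolding Pt by (simp add: algebra_simps power2_eq_square power3_eq_cube power4_eq_xxxx eval_nat_numeral)
  have "quartic_op a b (x, t*x) = (x, t*x)"
    unfolding quartic_op_def using e1 e2 x3 by (simp add: qsum)
  then show "(x, t*x) \<in> fixed_points_pos a b" using xp t by (simp add: fixed_points_pos_def)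
qed

lemma nam: "0 \<le> (z::real) \<Longrightarrow> -\<bar>c\<bar>*z \<le> c*z"
  by (rule mult_right_mono) auto

lemma P5_big:
  fixes a b :: "nat \<Rightarrow> real"
  assumes m0: "mu a b 0 > 0"
  shows "\<exists>M>y. P5 a b M > 0"
proof -
  define K where "K = \<bar>mu a b 1\<bar> + \<bar>mu a b 2\<bar> + \<bar>mu a b 3\<bar> + \<bar>mu a b 4\<bar> + \<bar>mu a b 5\<bar>"
  define M where "M = max y 1 + K / mu a b 0 + 1"
  have K0: "K \<ge> 0" by (simp add: K_def)
  have Km: "K / mu a b 0 \<ge> 0" using K0 m0 by simp
  have M1: "M > 1" "M > y" using Km unfolding M_def by linarith+
  have MK: "mu a b 0 * M > K"
  proof -
    have "mu a b 0 * M = mu a b 0 * (max y 1 + 1) + K" using m0 unfolding M_def by (simp add: distrib_left)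
    moreover have "mu a b 0 * (max y 1 + 1) > 0" using m0 by (intro mult_pos_pos) auto
    ultimately show ?thesis by linarith
  qed
  have p0: "M^1 \<le> M^4" "M^2 \<le> M^4" "M^3 \<le> M^4" "M^0 \<le> M^4"
    using M1 by (intro power_increasing; simp)+
  then have p1: "M \<le> M^4" "M^2 \<le> M^4" "M^3 \<le> M^4" "1 \<le> M^4" by simp_all
  have t1: "mu a b 1 * M^4 \<ge> -\<bar>mu a b 1\<bar> * M^4" using M1 by (intro nam) simp
  have t2: "mu a b 2 * M^3 \<ge> -\<bar>mu a b 2\<bar> * M^4"
  proof -
    have "-\<bar>mu a b 2\<bar> * M^4 \<le> -\<bar>mu a b 2\<bar> * M^3" using p1 by (simp add: mult_left_mono)
    also have "\<dots> \<le> mu a b 2 * M^3" using M1 by (intro nam) simp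
    finally show ?thesis .
  qed
  have t3: "mu a b 3 * M^2 \<ge> -\<bar>mu a b 3\<bar> * M^4"
  proof -
    have "-\<bar>mu a b 3\<bar> * M^4 \<le> -\<bar>mu a b 3\<bar> * M^2" using p1 by (simp add: mult_left_mono)
    also have "\<dots> \<le> mu a b 3 * M^2" using M1 by (intro nam) simp
    finally show ?thesis .
  qed
  have t4: "mu a b 4 * M \<ge> -\<bar>mu a b 4\<bar> * M^4"
  proof -
    have "-\<bar>mu a b 4\<bar> * M^4 \<le> -\<bar>mu a b 4\<bar> * M" using p1 by (simp add: mult_left_mono)
    also have "\<dots> \<le> mu a b 4 * M" using M1 by (intro nam) simp
    finally show ?thesis .
  qed
  have t5: "- mu a b 5 \<ge> -\<bar>mu a b 5\<bar> * M^4"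
  proof -
    have "-\<bar>mu a b 5\<bar> * M^4 \<le> -\<bar>mu a b 5\<bar>" using mult_left_mono[OF p1(4), of "\<bar>mu a b 5\<bar>"] by simp
    also have "\<dots> \<le> - mu a b 5" by simp
    finally show ?thesis .
  qed
  have "P5 a b M \<ge> mu a b 0 * M^5 - K * M^4"
    using t1 t2 t3 t4 t5 unfolding P5_def K_def by (simp add: algebra_simps eval_nat_numeral del: mult_minus_left)
  moreover have "mu a b 0 * M^5 - K * M^4 = M^4 * (mu a b 0 * M - K)" by (simp add: algebra_simps eval_nat_numeral)
  moreover have "M^4 * (mu a b 0 * M - K) > 0" using MK M1 by simp
  ultimately show ?thesis using M1 by auto
qed



lemma shift_ident:
  fixes m0 m1 m2 m3 m4 x :: real
  assumes "m0 \<noteq> 0"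
  shows "5*m0*((x + m1/(5*m0))^4 + ((15 * m0 * m2 - 6 * m1^2) / (25 * m0^2))*(x + m1/(5*m0))^2
     + ((50 * m0^2 * m3 + 8 * m1^3 - 30 * m0 * m1 * m2) / (125 * m0^3))*(x + m1/(5*m0))
     + ((15 * m0 * m1^2 * m2 - 50 * m0^2 * m1 * m3 - 3 * m1^4 + 125 * m0^3 * m4) / (625 * m0^4)))
   = 5*m0*x^4 + 4*m1*x^3 + 3*m2*x^2 + 2*m3*x + m4"
  using assms by (simp add: field_simps power2_eq_square power3_eq_cube power4_eq_xxxx)

theorem theorem2:
  fixes a b :: "nat \<Rightarrow> real"
  assumes apos: "\<forall>i\<le>4. a i > 0"
    and bpos: "\<forall>i\<le>4. b i > 0"
    and Qneg: "cQ a b < 0"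
    and z0pos: "z0 a b > 0"
    and ximin: "xi_min a b > 0"
    and root: "P5 a b (xi_min a b) = 0 \<or> P5 a b (xi_max a b) = 0"
  shows "\<exists>u v. u \<in> fixed_points_pos a b \<and> v \<in> fixed_points_pos a b \<and> u \<noteq> v"
proof -
  have m0: "mu a b 0 > 0" using apos by (simp add: mu_def)
  have m5: "mu a b 5 > 0" using bpos by (simp add: mu_def)
  define p where "p = pp a b"
  define q where "q = qq a b"
  define r where "r = rr a b"
  define A where "A = ca a b"
  define B where "B = cb a b"
  have Ae: "A = -(p^2/12) - r" by (simp add: A_def ca_def p_def r_def)
  have Be: "B = -(p^3/108) + p*r/3 - q^2/8" by (simp add: B_def cb_def p_def r_def q_def)
  have Q: "(A/3)^3 + (B/2)^2 < 0" using Qneg by (simp add: cQ_def A_def B_def)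
  define al where "al = arccos (-(B/2) * (sqrt(-3/A))^3)"
  define mm where "mm = sqrt(-A/3)"
  note tr = trig_roots[OF Q, folded al_def mm_def]
  have z0e: "z0 a b = 2*mm*cos(2*pi/3+al/3) - p/3"
    by (simp add: z0_def mm_def al_def alpha_def A_def B_def p_def)
  define Z0 where "Z0 = 2*mm*cos(2*pi/3+al/3) - p/3"
  define Z1 where "Z1 = 2*mm*cos(2*pi/3-al/3) - p/3"
  define Z2 where "Z2 = 2*mm*cos(al/3) - p/3"
  have res: "z^3 + p*z^2 + (p^2/4 - r)*z - q^2/8 = (z+p/3)^3 + A*(z+p/3) + B" for z
    unfolding Ae Be by (simp add: field_simps power2_eq_square power3_eq_cube)
  have roots: "z^3 + p*z^2 + (p^2/4 - r)*z - q^2/8 = 0" if "z \<in> {Z0,Z1,Z2}" for z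
  proof -
    have "z + p/3 = 2*mm*cos(2*pi/3+al/3) \<or> z + p/3 = 2*mm*cos(2*pi/3-al/3) \<or> z+p/3 = 2*mm*cos(al/3)"
      using that unfolding Z0_def Z1_def Z2_def by auto
    moreover have "(2*mm*cos th)^3 + A*(2*mm*cos th) + B = 0" if "th \<in> {al/3, 2*pi/3 - al/3, 2*pi/3 + al/3}" for th
      using tr(5)[OF that] .
    ultimately show ?thesis unfolding res by auto
  qed
  have Z0p: "Z0 > 0" using z0pos z0e Z0_def by simp
  have Z01: "Z0 < Z1" unfolding Z0_def Z1_def using tr(2) tr(6) by simp
  have Z12: "Z1 < Z2" unfolding Z2_def Z1_def using tr(2) tr(7) by simp
  define s where "s = sqrt(2*Z0)"
  define c1 where "c1 = p/2+Z0+q/(2*s)"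
  define c2 where "c2 = p/2+Z0-q/(2*s)"
  define u where "u = sqrt(2*Z0 - 4*c1)"
  define v where "v = sqrt(2*Z0 - 4*c2)"
  have Z02: "Z0 < Z2" "Z1 \<noteq> Z2" using Z01 Z12 by auto
  note qf = quartic_fact[OF Z0p Z01 Z02 roots, folded s_def, folded c1_def c2_def, folded u_def v_def]
  define sh where "sh = mu a b 1 / (5 * mu a b 0)"
  define L where "L = [(s+u)/2 - sh, (s-u)/2 - sh, (-s+v)/2 - sh, (-s-v)/2 - sh]"
  have xe: "xi_ext a b = L"
    using z0e unfolding xi_ext_def Let_def L_def sh_def u_def v_def c1_def c2_def s_def Z0_def
      p_def q_def by simp
  have dL: "distinct L" using qf(2) unfolding L_def by auto
  have cardL: "card (set L) = 4" using distinct_card[OF dL] by (simp add: L_def)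
  have der: "(P5 a b has_real_derivative (5 * mu a b 0 * (\<Prod>y\<in>set L. x - y))) (at x)" for x
  proof -
    have d: "(P5 a b has_real_derivative (5*mu a b 0*x^4 + 4*mu a b 1*x^3 + 3*mu a b 2*x^2 + 2*mu a b 3*x + mu a b 4)) (at x)"
      unfolding P5_def[abs_def] by (auto intro!: derivative_eq_intros simp: eval_nat_numeral)
    have "(\<Prod>y\<in>set L. x - y) = (x+sh-(s+u)/2)*(x+sh-(s-u)/2)*(x+sh-(-s+v)/2)*(x+sh-(-s-v)/2)"
    proof -
      have e: "\<And>w. x - (w - sh) = x + sh - w" by simp
      have "(\<Prod>y\<in>set L. x - y) = prod_list (map (\<lambda>y. x - y) L)" by (rule prod.distinct_set_conv_list[OF dL])
      then show ?thesis unfolding L_def by (simp only: list.map prod_list.Cons prod_list.Nil e mult_1_right mult.assoc)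
    qed
    also have "\<dots> = (x+sh)^4 + p*(x+sh)^2 + q*(x+sh) + r" using qf(1)[of "x+sh"] by simp
    finally have "5 * mu a b 0 * (\<Prod>y\<in>set L. x - y) = 5*mu a b 0*x^4 + 4*mu a b 1*x^3 + 3*mu a b 2*x^2 + 2*mu a b 3*x + mu a b 4"
      using shift_ident[of "mu a b 0" x "mu a b 1" "mu a b 2" "mu a b 3" "mu a b 4"] m0
      by (simp add: sh_def p_def q_def r_def pp_def qq_def rr_def Let_def)
    then show ?thesis using d by simp
  qed
  have f0: "P5 a b 0 < 0" using m5 by (simp add: P5_def)
  obtain t1 t2 where t: "t1 > 0" "t2 > 0" "t1 \<noteq> t2" "P5 a b t1 = 0" "P5 a b t2 = 0"
    using two_roots[of "set L" "5 * mu a b 0" "P5 a b", OF _ cardL _ der f0 P5_big[OF m0]]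
      m0 ximin root unfolding xi_min_def xi_max_def xe by auto
  note F1 = fixpt[OF apos t(1) t(4)] and F2 = fixpt[OF apos t(2) t(5)]
  obtain x1 where X1: "(x1, t1*x1) \<in> fixed_points_pos a b" "x1 > 0" using F1 by blast
  obtain x2 where X2: "(x2, t2*x2) \<in> fixed_points_pos a b" "x2 > 0" using F2 by blast
  have "(x1, t1*x1) \<noteq> (x2, t2*x2)"
  proof
    assume "(x1, t1*x1) = (x2, t2*x2)"
    then have "x1 = x2" "t1*x1 = t2*x1" by auto
    then show False using X1(2) t(3) by simp
  qed
  then show ?thesis using X1 X2 by blast
qed


end
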